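(* Let $\Omega\subseteq\mathbb{R}^d$ be a compact convex set with non-empty interior, and let $\mu_0,\mu_1$ be probability measures on $\Omega$ with Lebesgue densities $p_0,p_1$; let $v(t,z)=\mathbb{E}[X_1-X_0\mid(1-t)X_0+tX_1=z]$ for independent $X_0\sim\mu_0$, $X_1\sim\mu_1$. Then $$\sup_{t\in[0,1]}\|v(t,z)\|\le\mathrm{diam}(\Omega)\quad\text{for all }z\in\Omega^\circ.$$ If moreover $p_0,p_1$ are continuous, uniformly bounded and bounded away from zero on $\Omega$, with $\underline{\mathfrak p}=\inf_{x\in\Omega}\min\{p_0(x),p_1(x)\}$ and $\overline{\mathfrak p}=\sup_{x\in\Omega}\max\{p_0(x),p_1(x)\}$, then for all $t\in[0,1]$ and $\varepsilon,\eta>0$, $$\sup_{z,z'\in\Omega^{-\varepsilon},\ \|z-z'\|\le\eta}\|v(t,z)-v(t,z')\|\le\mathfrak L_1\omega(\eta)+\mathfrak L_2(\varepsilon)\eta,$$ where $\mathfrak L_1=9\,\mathrm{diam}(\Omega)$ and $$\mathfrak L_2(\varepsilon)=\frac{3\,\mathrm{diam}(\Omega)}{\omega^{-1}(1)}+\frac{1}{\varepsilon^2}\frac{\overline{\mathfrak p}^2}{\underline{\mathfrak p}^2}3d\,5^{d+1}\mathrm{diam}^2(\Omega).$$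
   Context: $\omega(\eta)=\sup_{z,z'\in\Omega,\|z-z'\|\le\eta}\max\{|p_0(z)/p_0(z')-1|,|p_1(z)/p_1(z')-1|\}$ for $\eta\in[0,\mathrm{diam}(\Omega)]$, and $\omega^{-1}$ denotes its inverse. $\Omega^{-\varepsilon}=\{x\in\mathbb{R}^d:\mathcal{B}(x,\varepsilon)\subseteq\Omega\}$ with $\mathcal{B}(x,\varepsilon)$ the closed Euclidean ball. For $t\in(0,1)$ and $z\in\Omega^\circ$, $v(t,z)=\frac{\int_{S_t(z)}\delta p_0(z-t\delta)p_1(z+(1-t)\delta)d\delta}{\int_{S_t(z)}p_0(z-t\delta)p_1(z+(1-t)\delta)d\delta}$ with $S_t(z)=\{\delta:z-t\delta\in\Omega,\ z+(1-t)\delta\in\Omega\}$. *)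

theory Defs
  imports "HOL-Analysis.Analysis"
begin

definition S_set :: "'a::euclidean_space set \<Rightarrow> real \<Rightarrow> 'a \<Rightarrow> 'a set" where
  "S_set \<Omega> t z = {\<delta>. z - t *\<^sub>R \<delta> \<in> \<Omega> \<and> z + (1 - t) *\<^sub>R \<delta> \<in> \<Omega>}"

text \<open>The velocity field v(t,z), given by the explicit ratio-of-integrals formula.\<close>
definition vfield :: "'a::euclidean_space set \<Rightarrow> ('a \<Rightarrow> real) \<Rightarrow> ('a \<Rightarrow> real) \<Rightarrow> real \<Rightarrow> 'a \<Rightarrow> 'a" where
  "vfield \<Omega> p0 p1 t z =
     (1 / (LINT \<delta>:S_set \<Omega> t z|lborel. p0 (z - t *\<^sub>R \<delta>) * p1 (z + (1 - t) *\<^sub>R \<delta>))) *\<^sub>R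
     (LINT \<delta>:S_set \<Omega> t z|lborel. (p0 (z - t *\<^sub>R \<delta>) * p1 (z + (1 - t) *\<^sub>R \<delta>)) *\<^sub>R \<delta>)"

definition omega :: "'a::euclidean_space set \<Rightarrow> ('a \<Rightarrow> real) \<Rightarrow> ('a \<Rightarrow> real) \<Rightarrow> real \<Rightarrow> real" where
  "omega \<Omega> p0 p1 \<eta> =
     Sup ((\<lambda>(z, z'). max \<bar>p0 z / p0 z' - 1\<bar> \<bar>p1 z / p1 z' - 1\<bar>) `
          {(z, z'). z \<in> \<Omega> \<and> z' \<in> \<Omega> \<and> norm (z - z') \<le> \<eta>})"

definition omega_inv1 :: "'a::euclidean_space set \<Rightarrow> ('a \<Rightarrow> real) \<Rightarrow> ('a \<Rightarrow> real) \<Rightarrow> real" where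
  "omega_inv1 \<Omega> p0 p1 = Sup {\<eta>. 0 \<le> \<eta> \<and> \<eta> \<le> diameter \<Omega> \<and> omega \<Omega> p0 p1 \<eta> \<le> 1}"

definition inner_set :: "'a::euclidean_space set \<Rightarrow> real \<Rightarrow> 'a set" where
  "inner_set \<Omega> \<epsilon> = {x. cball x \<epsilon> \<subseteq> \<Omega>}"

definition is_density_on :: "'a::euclidean_space set \<Rightarrow> ('a \<Rightarrow> real) \<Rightarrow> bool" where
  "is_density_on \<Omega> p \<longleftrightarrow> p \<in> borel_measurable lborel \<and> (\<forall>x\<in>\<Omega>. 0 \<le> p x)
     \<and> set_integrable lborel \<Omega> p \<and> (LINT x:\<Omega>|lborel. p x) = 1"

end

theory Submission imports Defs "HOL-Analysis.Analysis" begin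

lemma S_norm_le:
  assumes "bounded \<Omega>" "\<delta> \<in> S_set \<Omega> t z"
  shows "norm \<delta> \<le> diameter \<Omega>"
proof -
  have "dist (z + (1 - t) *\<^sub>R \<delta>) (z - t *\<^sub>R \<delta>) \<le> diameter \<Omega>"
    using assms by (intro diameter_bounded_bound) (auto simp: S_set_def)
  moreover have "dist (z + (1 - t) *\<^sub>R \<delta>) (z - t *\<^sub>R \<delta>) = norm \<delta>"
    by (simp add: dist_norm algebra_simps)
  ultimately show ?thesis by simp
qed

lemma S_closed:
  assumes "closed \<Omega>"
  shows "closed (S_set \<Omega> t z)"
proof -
  have "S_set \<Omega> t z = (\<lambda>\<delta>. z - t *\<^sub>R \<delta>) -` \<Omega> \<inter> (\<lambda>\<delta>. z + (1 - t) *\<^sub>R \<delta>) -` \<Omega>"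
    by (auto simp: S_set_def)
  moreover have "closed ((\<lambda>\<delta>. z - t *\<^sub>R \<delta>) -` \<Omega>)"
    by (intro continuous_closed_vimage assms) (intro continuous_intros)
  moreover have "closed ((\<lambda>\<delta>. z + (1 - t) *\<^sub>R \<delta>) -` \<Omega>)"
    by (intro continuous_closed_vimage assms) (intro continuous_intros)
  ultimately show ?thesis by auto
qed

lemma S_compact:
  assumes "compact \<Omega>"
  shows "compact (S_set \<Omega> t z)"
proof -
  have "bounded \<Omega>" "closed \<Omega>" using assms compact_imp_bounded compact_imp_closed by auto
  then have "S_set \<Omega> t z \<subseteq> cball 0 (diameter \<Omega>)" using S_norm_le by fastforce
  then have "bounded (S_set \<Omega> t z)" using bounded_subset by blast
  then show ?thesis using S_closed[OF \<open>closed \<Omega>\<close>] by (simp add: compact_eq_bounded_closed)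
qed

lemma S_sets: "compact \<Omega> \<Longrightarrow> S_set \<Omega> t z \<in> sets lborel"
  using S_compact[of \<Omega> t z] by (simp add: borel_compact)

lemma S_scale:
  assumes "convex \<Omega>" "cball z \<epsilon> \<subseteq> \<Omega>" "0 \<le> l" "l \<le> 1" "norm (z' - z) \<le> (1 - l) * \<epsilon>"
    and "\<delta> \<in> S_set \<Omega> t z"
  shows "l *\<^sub>R \<delta> \<in> S_set \<Omega> t z'"
proof (cases "l = 1")
  case True
  then have "z' = z" using assms(5) by simp
  then show ?thesis using True assms(6) by simp
next
  case False
  then have l1: "l < 1" using assms by simp
  define w where "w = z + (1 / (1 - l)) *\<^sub>R (z' - z)"
  have "norm (w - z) = norm (z' - z) / (1 - l)" using l1 by (simp add: w_def)
  also have "\<dots> \<le> \<epsilon>" using l1 assms(5) by (simp add: divide_le_eq mult.commute)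
  finally have "w \<in> \<Omega>" using assms(2) by (auto simp: dist_norm norm_minus_commute)
  have w: "(1 - l) *\<^sub>R w = z' - l *\<^sub>R z" using l1 by (simp add: w_def algebra_simps)
  have a: "z - t *\<^sub>R \<delta> \<in> \<Omega>" "z + (1 - t) *\<^sub>R \<delta> \<in> \<Omega>" using assms(6) by (auto simp: S_set_def)
  have "l *\<^sub>R (z - t *\<^sub>R \<delta>) + (1 - l) *\<^sub>R w \<in> \<Omega>"
    using convexD[OF assms(1) a(1) \<open>w \<in> \<Omega>\<close>, of l "1 - l"] assms by simp
  moreover have "l *\<^sub>R (z - t *\<^sub>R \<delta>) + (1 - l) *\<^sub>R w = z' - t *\<^sub>R (l *\<^sub>R \<delta>)"
    unfolding w by (simp add: algebra_simps)
  moreover have "l *\<^sub>R (z + (1 - t) *\<^sub>R \<delta>) + (1 - l) *\<^sub>R w \<in> \<Omega>"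
    using convexD[OF assms(1) a(2) \<open>w \<in> \<Omega>\<close>, of l "1 - l"] assms by simp
  moreover have "l *\<^sub>R (z + (1 - t) *\<^sub>R \<delta>) + (1 - l) *\<^sub>R w = z' + (1 - t) *\<^sub>R (l *\<^sub>R \<delta>)"
    unfolding w by (simp add: algebra_simps)
  ultimately show ?thesis by (simp add: S_set_def)
qed

lemma S_cball:
  assumes "cball z \<epsilon> \<subseteq> \<Omega>" "0 \<le> t" "t \<le> 1"
  shows "cball 0 \<epsilon> \<subseteq> S_set \<Omega> t z"
proof
  fix \<delta> :: 'a assume "\<delta> \<in> cball 0 \<epsilon>"
  then have n: "norm \<delta> \<le> \<epsilon>" by simp
  have "norm (t *\<^sub>R \<delta>) \<le> \<epsilon>" using n assms by (simp add: mult_le_one order_trans[OF mult_left_le_one_le])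
  moreover have "norm ((1 - t) *\<^sub>R \<delta>) \<le> \<epsilon>" using n assms by (simp add: order_trans[OF mult_left_le_one_le])
  ultimately show "\<delta> \<in> S_set \<Omega> t z" using assms(1)
    by (auto simp: S_set_def dist_norm subset_iff)
qed

lemma measure_scale:
  fixes S :: "'a::euclidean_space set"
  assumes "compact S" "0 < l"
  shows "measure lborel ((\<lambda>x. l *\<^sub>R x) ` S) = l ^ DIM('a) * measure lborel S"
proof -
  have c: "compact ((\<lambda>x. l *\<^sub>R x) ` S)"
    using assms(1) by (intro compact_continuous_image) (auto intro!: continuous_intros)
  have "measure lebesgue ((\<lambda>x. l *\<^sub>R x + 0) ` S) = \<bar>l\<bar> ^ DIM('a) * measure lebesgue S"
    by (rule measure_lebesgue_affine)
  then show ?thesis using assms c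
    by (simp add: borel_compact)
qed


definition wt :: "'a::euclidean_space set \<Rightarrow> ('a \<Rightarrow> real) \<Rightarrow> ('a \<Rightarrow> real) \<Rightarrow> real \<Rightarrow> 'a \<Rightarrow> 'a \<Rightarrow> real" where
  "wt \<Omega> p0 p1 t z \<delta> = indicator (S_set \<Omega> t z) \<delta> * (p0 (z - t *\<^sub>R \<delta>) * p1 (z + (1 - t) *\<^sub>R \<delta>))"

lemma vfield_eq: "vfield \<Omega> p0 p1 t z =
  (1 / integral\<^sup>L lborel (wt \<Omega> p0 p1 t z)) *\<^sub>R integral\<^sup>L lborel (\<lambda>\<delta>. wt \<Omega> p0 p1 t z \<delta> *\<^sub>R \<delta>)"
  unfolding vfield_def set_lebesgue_integral_def wt_def by simp

lemma wt_meas: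
  assumes "p0 \<in> borel_measurable lborel" "p1 \<in> borel_measurable lborel" "compact \<Omega>"
  shows "wt \<Omega> p0 p1 t z \<in> borel_measurable lborel"
proof -
  have [measurable]: "S_set \<Omega> t z \<in> sets lborel" using S_sets[OF assms(3)] .
  have m0: "p0 \<in> borel_measurable borel" "p1 \<in> borel_measurable borel" using assms by auto
  have [measurable]: "(\<lambda>\<delta>. p0 (z - t *\<^sub>R \<delta>)) \<in> borel_measurable lborel"
    by (rule measurable_compose[OF _ m0(1)]) simp
  have [measurable]: "(\<lambda>\<delta>. p1 (z + (1 - t) *\<^sub>R \<delta>)) \<in> borel_measurable lborel"
    by (rule measurable_compose[OF _ m0(2)]) simp
  show ?thesis unfolding wt_def by measurable
qed

lemma wt_nonneg:
  assumes "\<forall>x\<in>\<Omega>. 0 \<le> p0 x" "\<forall>x\<in>\<Omega>. 0 \<le> p1 x"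
  shows "0 \<le> wt \<Omega> p0 p1 t z \<delta>"
  using assms by (auto simp: wt_def S_set_def indicator_def)

lemma wt_zero: "\<delta> \<notin> S_set \<Omega> t z \<Longrightarrow> wt \<Omega> p0 p1 t z \<delta> = 0"
  by (simp add: wt_def)

lemma part1:
  assumes "compact \<Omega>" "is_density_on \<Omega> p0" "is_density_on \<Omega> p1"
  shows "norm (vfield \<Omega> p0 p1 t z) \<le> diameter \<Omega>"
proof -
  let ?g = "wt \<Omega> p0 p1 t z"
  have bd: "bounded \<Omega>" using assms(1) compact_imp_bounded by auto
  have d0: "0 \<le> diameter \<Omega>" using diameter_ge_0[OF bd] .
  have gm: "?g \<in> borel_measurable lborel"
    using assms by (intro wt_meas) (auto simp: is_density_on_def)
  have g0: "0 \<le> ?g \<delta>" for \<delta> using assms by (intro wt_nonneg) (auto simp: is_density_on_def)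
  have nb: "norm (?g \<delta> *\<^sub>R \<delta>) \<le> diameter \<Omega> * ?g \<delta>" for \<delta>
  proof (cases "\<delta> \<in> S_set \<Omega> t z")
    case True
    then have "norm \<delta> \<le> diameter \<Omega>" using S_norm_le[OF bd] by blast
    then show ?thesis using g0[of \<delta>] by (simp add: mult.commute mult_right_mono)
  qed (simp add: wt_zero)
  show ?thesis
  proof (cases "integrable lborel ?g")
    case True
    have hi: "integrable lborel (\<lambda>\<delta>. ?g \<delta> *\<^sub>R \<delta>)"
    proof (rule Bochner_Integration.integrable_bound)
      show "integrable lborel (\<lambda>\<delta>. diameter \<Omega> * ?g \<delta>)" using True by simp
      show "(\<lambda>\<delta>. ?g \<delta> *\<^sub>R \<delta>) \<in> borel_measurable lborel" using gm by measurable
      show "AE x in lborel. norm (?g x *\<^sub>R x) \<le> norm (diameter \<Omega> * ?g x)"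
        using nb g0 d0 by (auto intro!: AE_I2 order_trans[OF nb])
    qed
    have "norm (integral\<^sup>L lborel (\<lambda>\<delta>. ?g \<delta> *\<^sub>R \<delta>)) \<le> integral\<^sup>L lborel (\<lambda>\<delta>. diameter \<Omega> * ?g \<delta>)"
      by (rule Bochner_Integration.integral_norm_bound_integral) (use hi True nb in auto)
    also have "\<dots> = diameter \<Omega> * integral\<^sup>L lborel ?g" by simp
    finally have N: "norm (integral\<^sup>L lborel (\<lambda>\<delta>. ?g \<delta> *\<^sub>R \<delta>)) \<le> diameter \<Omega> * integral\<^sup>L lborel ?g" .
    have D0: "0 \<le> integral\<^sup>L lborel ?g" using g0 by simp
    show ?thesis
    proof (cases "integral\<^sup>L lborel ?g = 0")
      case True then show ?thesis by (simp add: vfield_eq d0)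
    next
      case False
      then have "0 < integral\<^sup>L lborel ?g" using D0 by simp
      then show ?thesis using N by (simp add: vfield_eq divide_le_eq mult.commute)
    qed
  next
    case False
    then show ?thesis by (simp add: vfield_eq not_integrable_integral_eq d0)
  qed
qed


lemma ratio_prod:
  fixes a b a' b' w :: real
  assumes "0 < a" "0 < b" "\<bar>a' / a - 1\<bar> \<le> w" "\<bar>b' / b - 1\<bar> \<le> w"
  shows "\<bar>a * b - a' * b'\<bar> \<le> (2 * w + w\<^sup>2) * (a * b)"
proof -
  define r where "r = a' / a - 1"
  define s where "s = b' / b - 1"
  have a': "a' = a * (1 + r)" using assms(1) by (simp add: r_def field_simps)
  have b': "b' = b * (1 + s)" using assms(2) by (simp add: s_def field_simps)
  have "a * b - a' * b' = - (a * b) * (r + s + r * s)" by (simp add: a' b' algebra_simps)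
  then have "\<bar>a * b - a' * b'\<bar> = (a * b) * \<bar>r + s + r * s\<bar>"
    using assms(1,2) by (simp add: abs_mult)
  moreover have "\<bar>r + s + r * s\<bar> \<le> 2 * w + w\<^sup>2"
  proof -
    have hr: "\<bar>r\<bar> \<le> w" "\<bar>s\<bar> \<le> w" using assms(3,4) r_def s_def by auto
    have "\<bar>r * s\<bar> \<le> w * w" unfolding abs_mult
      using hr by (intro mult_mono) auto
    then show ?thesis using hr by (simp add: power2_eq_square)
  qed
  ultimately show ?thesis using assms(1,2) by (simp add: mult.commute mult_left_mono)
qed

lemma meas_sym_diff:
  fixes \<Omega> :: "'a::euclidean_space set" and \<eta> \<epsilon> :: real
  assumes "compact \<Omega>" "convex \<Omega>" "cball z \<epsilon> \<subseteq> \<Omega>" "cball z' \<epsilon> \<subseteq> \<Omega>"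
    "norm (z - z') \<le> \<eta>" "0 < \<eta>" "\<eta> \<le> \<epsilon> / 2"
  shows "measure lborel (S_set \<Omega> t z - S_set \<Omega> t z') + measure lborel (S_set \<Omega> t z' - S_set \<Omega> t z)
     \<le> (real DIM('a) * \<eta> / \<epsilon>) * (1 + 2 ^ DIM('a)) * measure lborel (S_set \<Omega> t z)"
proof -
  define S where "S = S_set \<Omega> t z"
  define S' where "S' = S_set \<Omega> t z'"
  define l where "l = 1 - \<eta> / \<epsilon>"
  define d where "d = DIM('a)"
  have e0: "0 < \<epsilon>" using assms by simp
  have l0: "1/2 \<le> l" "l \<le> 1" "0 < l" using assms e0 by (auto simp: l_def field_simps)
  have le: "(1 - l) * \<epsilon> = \<eta>" using e0 by (simp add: l_def)
  have cS: "compact S" "compact S'" unfolding S_def S'_def using S_compact assms(1) by auto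
  have cL: "compact ((*\<^sub>R) l ` S)" "compact ((*\<^sub>R) l ` S')"
    using cS by (auto intro!: compact_continuous_image continuous_intros)
  have sub1: "(*\<^sub>R) l ` S \<subseteq> S'" unfolding S_def S'_def
    using S_scale[OF assms(2,3) _ l0(2), where z'=z' and t=t] l0 le assms(5)
    by (auto simp: norm_minus_commute)
  have sub2: "(*\<^sub>R) l ` S' \<subseteq> S" unfolding S_def S'_def
    using S_scale[OF assms(2,4) _ l0(2), where z'=z and t=t] l0 le assms(5)
    by (auto simp: norm_minus_commute)
  have sub3: "(*\<^sub>R) l ` S \<subseteq> S" unfolding S_def
    using S_scale[OF assms(2,3) _ l0(2), where z'=z and t=t] l0 le assms(6) by auto
  have sub4: "(*\<^sub>R) l ` S' \<subseteq> S'" unfolding S'_def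
    using S_scale[OF assms(2,4) _ l0(2), where z'=z' and t=t] l0 le assms(6) by auto
  have mL: "measure lborel ((*\<^sub>R) l ` S) = l ^ d * measure lborel S"
       "measure lborel ((*\<^sub>R) l ` S') = l ^ d * measure lborel S'"
    using measure_scale[OF cS(1) l0(3)] measure_scale[OF cS(2) l0(3)] by (auto simp: d_def)
  have fS: "S \<in> fmeasurable lborel" "S' \<in> fmeasurable lborel"
    using cS by (auto intro: fmeasurable_compact)
  have sS: "S \<in> sets lborel" "S' \<in> sets lborel" using fS by (auto intro: fmeasurableD)
  have sL: "(*\<^sub>R) l ` S \<in> sets lborel" "(*\<^sub>R) l ` S' \<in> sets lborel"
    using cL by (auto simp: borel_compact)
  have A: "measure lborel (S - S') \<le> measure lborel (S - (*\<^sub>R) l ` S)"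
    using sub1 fS sL sS by (intro measure_mono_fmeasurable fmeasurable_Diff) (auto intro!: sets.Diff)
  also have "\<dots> = measure lborel S - measure lborel ((*\<^sub>R) l ` S)"
    using sub3 fS sL by (intro measure_Diff) (auto simp: fmeasurable_def)
  finally have A': "measure lborel (S - S') \<le> (1 - l ^ d) * measure lborel S"
    by (simp add: mL algebra_simps)
  have "measure lborel (S' - S) \<le> measure lborel (S' - (*\<^sub>R) l ` S')"
    using sub2 fS sL sS by (intro measure_mono_fmeasurable fmeasurable_Diff) (auto intro!: sets.Diff)
  also have "\<dots> = measure lborel S' - measure lborel ((*\<^sub>R) l ` S')"
    using sub4 fS sL by (intro measure_Diff) (auto simp: fmeasurable_def)
  finally have B': "measure lborel (S' - S) \<le> (1 - l ^ d) * measure lborel S'"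
    by (simp add: mL algebra_simps)
  have "l ^ d * measure lborel S' \<le> measure lborel S"
    using sub2 fS sL by (subst mL(2)[symmetric]) (intro measure_mono_fmeasurable)
  moreover have "(1/2) ^ d \<le> l ^ d" using l0 by (intro power_mono) auto
  ultimately have "(1/2) ^ d * measure lborel S' \<le> measure lborel S"
    by (meson measure_nonneg mult_right_mono order_trans)
  then have mS': "measure lborel S' \<le> 2 ^ d * measure lborel S"
    by (simp add: field_simps)
  have bern: "1 + real d * (- (\<eta> / \<epsilon>)) \<le> (1 + - (\<eta> / \<epsilon>)) ^ d"
    using assms e0 by (intro Bernoulli_inequality) (simp add: field_simps)
  have q: "1 - l ^ d \<le> real d * \<eta> / \<epsilon>" using bern by (simp add: l_def)
  have q0: "0 \<le> 1 - l ^ d" using l0 by (simp add: power_le_one)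
  have "measure lborel (S - S') + measure lborel (S' - S)
      \<le> (1 - l ^ d) * measure lborel S + (1 - l ^ d) * (2 ^ d * measure lborel S)"
    using A' B' mS' q0 by (meson add_mono mult_left_mono order_trans)
  also have "\<dots> = (1 - l ^ d) * (1 + 2 ^ d) * measure lborel S" by (simp add: algebra_simps)
  also have "\<dots> \<le> (real d * \<eta> / \<epsilon>) * (1 + 2 ^ d) * measure lborel S"
    using q by (intro mult_right_mono) auto
  finally show ?thesis unfolding S_def S'_def d_def .
qed


lemma wt_vec_int:
  assumes "compact \<Omega>" "is_density_on \<Omega> p0" "is_density_on \<Omega> p1"
    and "integrable lborel (wt \<Omega> p0 p1 t z)"
  shows "integrable lborel (\<lambda>\<delta>. wt \<Omega> p0 p1 t z \<delta> *\<^sub>R \<delta>)"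
proof -
  let ?g = "wt \<Omega> p0 p1 t z"
  have bd: "bounded \<Omega>" using assms(1) compact_imp_bounded by auto
  have d0: "0 \<le> diameter \<Omega>" using diameter_ge_0[OF bd] .
  have gm: "?g \<in> borel_measurable lborel"
    using assms by (intro wt_meas) (auto simp: is_density_on_def)
  have g0: "0 \<le> ?g \<delta>" for \<delta> using assms by (intro wt_nonneg) (auto simp: is_density_on_def)
  have nb: "norm (?g \<delta> *\<^sub>R \<delta>) \<le> diameter \<Omega> * ?g \<delta>" for \<delta>
  proof (cases "\<delta> \<in> S_set \<Omega> t z")
    case True
    then have "norm \<delta> \<le> diameter \<Omega>" using S_norm_le[OF bd] by blast
    then show ?thesis using g0[of \<delta>] by (simp add: mult.commute mult_right_mono)
  qed (simp add: wt_zero)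
  show ?thesis
  proof (rule Bochner_Integration.integrable_bound)
    show "integrable lborel (\<lambda>\<delta>. diameter \<Omega> * ?g \<delta>)" using assms(4) by simp
    show "(\<lambda>\<delta>. ?g \<delta> *\<^sub>R \<delta>) \<in> borel_measurable lborel" using gm by measurable
    show "AE x in lborel. norm (?g x *\<^sub>R x) \<le> norm (diameter \<Omega> * ?g x)"
      using nb g0 d0 by (auto intro!: AE_I2 order_trans[OF nb])
  qed
qed

lemma wt_bounds:
  assumes "\<forall>x\<in>\<Omega>. plo \<le> p0 x \<and> p0 x \<le> phi \<and> plo \<le> p1 x \<and> p1 x \<le> phi" "0 \<le> plo"
    and "\<delta> \<in> S_set \<Omega> t z"
  shows "plo\<^sup>2 \<le> wt \<Omega> p0 p1 t z \<delta>" "wt \<Omega> p0 p1 t z \<delta> \<le> phi\<^sup>2"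
proof -
  have a: "z - t *\<^sub>R \<delta> \<in> \<Omega>" "z + (1 - t) *\<^sub>R \<delta> \<in> \<Omega>" using assms(3) by (auto simp: S_set_def)
  have w: "wt \<Omega> p0 p1 t z \<delta> = p0 (z - t *\<^sub>R \<delta>) * p1 (z + (1 - t) *\<^sub>R \<delta>)"
    using assms(3) by (simp add: wt_def)
  show "plo\<^sup>2 \<le> wt \<Omega> p0 p1 t z \<delta>" unfolding w power2_eq_square
    using assms(1,2) a by (intro mult_mono) auto
  show "wt \<Omega> p0 p1 t z \<delta> \<le> phi\<^sup>2" unfolding w power2_eq_square
    using assms(1,2) a by (intro mult_mono) force+
qed

lemma wt_int:
  assumes "compact \<Omega>" "is_density_on \<Omega> p0" "is_density_on \<Omega> p1"
    "\<forall>x\<in>\<Omega>. plo \<le> p0 x \<and> p0 x \<le> phi \<and> plo \<le> p1 x \<and> p1 x \<le> phi" "0 \<le> plo"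
  shows "integrable lborel (wt \<Omega> p0 p1 t z)"
proof (rule Bochner_Integration.integrable_bound)
  let ?S = "S_set \<Omega> t z"
  have "emeasure lborel ?S < \<infinity>" using S_compact[OF assms(1)] emeasure_compact_finite by blast
  then show "integrable lborel (\<lambda>\<delta>. phi\<^sup>2 * indicator ?S \<delta> :: real)"
    using S_sets[OF assms(1)] by simp
  show "wt \<Omega> p0 p1 t z \<in> borel_measurable lborel"
    using assms by (intro wt_meas) (auto simp: is_density_on_def)
  have g0: "0 \<le> wt \<Omega> p0 p1 t z \<delta>" for \<delta> using assms by (intro wt_nonneg) (auto simp: is_density_on_def)
  show "AE x in lborel. norm (wt \<Omega> p0 p1 t z x) \<le> norm (phi\<^sup>2 * indicator ?S x :: real)"
  proof (intro AE_I2)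
    fix x
    show "norm (wt \<Omega> p0 p1 t z x) \<le> norm (phi\<^sup>2 * indicator ?S x :: real)"
    proof (cases "x \<in> ?S")
      case True then show ?thesis using wt_bounds[OF assms(4,5) True] g0[of x] by simp
    qed (simp add: wt_zero)
  qed
qed


lemma aux_div: fixes D p K m :: real
  shows "0 < D \<Longrightarrow> 0 < p \<Longrightarrow> 0 \<le> K \<Longrightarrow> p * m \<le> D \<Longrightarrow> K * m / D \<le> K / p"
  by (smt (verit, ccfv_SIG) divide_divide_eq_right divide_mono
    divide_nonneg_nonneg divide_nonpos_nonneg mult_nonneg_nonpos
    pos_divide_less_eq)

lemma part2_main:
  fixes \<Omega> :: "'a::euclidean_space set" and \<eta> \<epsilon> w plo phi t :: real
  assumes comp: "compact \<Omega>" and cvx: "convex \<Omega>"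
    and d0: "is_density_on \<Omega> p0" and d1: "is_density_on \<Omega> p1"
    and plo: "0 < plo" and bnds: "\<forall>x\<in>\<Omega>. plo \<le> p0 x \<and> p0 x \<le> phi \<and> plo \<le> p1 x \<and> p1 x \<le> phi"
    and t: "0 \<le> t" "t \<le> 1" and eta: "0 < \<eta>" "\<eta> \<le> \<epsilon> / 2"
    and bz: "cball z \<epsilon> \<subseteq> \<Omega>" "cball z' \<epsilon> \<subseteq> \<Omega>" and nz: "norm (z - z') \<le> \<eta>"
    and w: "0 \<le> w"
    and rat: "\<forall>x\<in>\<Omega>. \<forall>y\<in>\<Omega>. norm (x - y) \<le> \<eta> \<longrightarrow> \<bar>p0 x / p0 y - 1\<bar> \<le> w \<and> \<bar>p1 x / p1 y - 1\<bar> \<le> w"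
  shows "norm (vfield \<Omega> p0 p1 t z - vfield \<Omega> p0 p1 t z')
     \<le> 2 * diameter \<Omega> * (2 * w + w\<^sup>2)
       + 2 * diameter \<Omega> * (phi\<^sup>2 / plo\<^sup>2) * ((real DIM('a) * \<eta> / \<epsilon>) * (1 + 2 ^ DIM('a)))"
proof -
  define S where "S = S_set \<Omega> t z"
  define S' where "S' = S_set \<Omega> t z'"
  define g where "g = wt \<Omega> p0 p1 t z"
  define g' where "g' = wt \<Omega> p0 p1 t z'"
  define D where "D = integral\<^sup>L lborel g"
  define D' where "D' = integral\<^sup>L lborel g'"
  define N where "N = integral\<^sup>L lborel (\<lambda>\<delta>. g \<delta> *\<^sub>R \<delta>)"
  define N' where "N' = integral\<^sup>L lborel (\<lambda>\<delta>. g' \<delta> *\<^sub>R \<delta>)"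
  define v where "v = vfield \<Omega> p0 p1 t z"
  define v' where "v' = vfield \<Omega> p0 p1 t z'"
  define K where "K = (real DIM('a) * \<eta> / \<epsilon>) * (1 + 2 ^ DIM('a))"
  define A where "A = S - S'"
  define B where "B = S' - S"
  define diam where "diam = diameter \<Omega>"
  have bd: "bounded \<Omega>" using comp compact_imp_bounded by auto
  have diam0: "0 \<le> diam" using diameter_ge_0[OF bd] by (simp add: diam_def)
  have e0: "0 < \<epsilon>" using eta by simp
  have plo0: "0 \<le> plo" using plo by simp
  have ig: "integrable lborel g" "integrable lborel g'"
    unfolding g_def g'_def using wt_int[OF comp d0 d1 bnds plo0] by auto
  have ign: "integrable lborel (\<lambda>\<delta>. g \<delta> *\<^sub>R \<delta>)" "integrable lborel (\<lambda>\<delta>. g' \<delta> *\<^sub>R \<delta>)"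
    using wt_vec_int[OF comp d0 d1] ig unfolding g_def g'_def by auto
  have g0: "0 \<le> g \<delta>" "0 \<le> g' \<delta>" for \<delta> unfolding g_def g'_def
    using d0 d1 by (auto intro!: wt_nonneg simp: is_density_on_def)
  have gz: "\<delta> \<notin> S \<Longrightarrow> g \<delta> = 0" "\<delta> \<notin> S' \<Longrightarrow> g' \<delta> = 0" for \<delta>
    unfolding g_def g'_def S_def S'_def by (auto simp: wt_zero)
  have gb: "\<delta> \<in> S \<Longrightarrow> plo\<^sup>2 \<le> g \<delta> \<and> g \<delta> \<le> phi\<^sup>2" "\<delta> \<in> S' \<Longrightarrow> plo\<^sup>2 \<le> g' \<delta> \<and> g' \<delta> \<le> phi\<^sup>2" for \<delta>
    unfolding g_def g'_def S_def S'_def using wt_bounds[OF bnds plo0] by auto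
  have cS: "compact S" "compact S'" unfolding S_def S'_def using S_compact comp by auto
  have sS: "S \<in> sets lborel" "S' \<in> sets lborel" using cS by (auto simp: borel_compact)
  have fin: "emeasure lborel S < \<infinity>" "emeasure lborel S' < \<infinity>"
    using cS emeasure_compact_finite by auto
  have iS: "integrable lborel (indicator S :: 'a \<Rightarrow> real)" "integrable lborel (indicator S' :: 'a \<Rightarrow> real)"
    using sS fin by (auto intro!: integrable_real_indicator)
  have Dlow: "plo\<^sup>2 * measure lborel S \<le> D" "plo\<^sup>2 * measure lborel S' \<le> D'"
  proof -
    have "integral\<^sup>L lborel (\<lambda>\<delta>. plo\<^sup>2 * indicator S \<delta> :: real) \<le> D" unfolding D_def
    proof (rule integral_mono)
      show "integrable lborel (\<lambda>\<delta>. plo\<^sup>2 * indicator S \<delta> :: real)" using iS by simp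
      show "integrable lborel g" using ig by simp
      show "plo\<^sup>2 * indicator S \<delta> \<le> g \<delta>" for \<delta> using gb g0 by (cases "\<delta> \<in> S") auto
    qed
    then show "plo\<^sup>2 * measure lborel S \<le> D" by simp
    have "integral\<^sup>L lborel (\<lambda>\<delta>. plo\<^sup>2 * indicator S' \<delta> :: real) \<le> D'" unfolding D'_def
    proof (rule integral_mono)
      show "integrable lborel (\<lambda>\<delta>. plo\<^sup>2 * indicator S' \<delta> :: real)" using iS by simp
      show "integrable lborel g'" using ig by simp
      show "plo\<^sup>2 * indicator S' \<delta> \<le> g' \<delta>" for \<delta> using gb g0 by (cases "\<delta> \<in> S'") auto
    qed
    then show "plo\<^sup>2 * measure lborel S' \<le> D'" by simp
  qed
  have mpos: "0 < measure lborel S" "0 < measure lborel S'"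
  proof -
    have c0: "0 < measure lborel (cball (0::'a) \<epsilon>)" using content_cball_pos[OF e0] by simp
    have "measure lborel (cball (0::'a) \<epsilon>) \<le> measure lborel S" unfolding S_def
      using S_cball[OF bz(1) t] cS by (intro measure_mono_fmeasurable) (auto simp: S_def fmeasurable_compact)
    then show "0 < measure lborel S" by (rule less_le_trans[OF c0])
    have "measure lborel (cball (0::'a) \<epsilon>) \<le> measure lborel S'" unfolding S'_def
      using S_cball[OF bz(2) t] cS by (intro measure_mono_fmeasurable) (auto simp: S'_def fmeasurable_compact)
    then show "0 < measure lborel S'" by (rule less_le_trans[OF c0])
  qed
  have Dpos: "0 < D" "0 < D'"
    using less_le_trans[OF mult_pos_pos[OF zero_less_power[OF plo, of 2] mpos(1)] Dlow(1)]
      less_le_trans[OF mult_pos_pos[OF zero_less_power[OF plo, of 2] mpos(2)] Dlow(2)] by auto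
  have vN: "v = (1 / D) *\<^sub>R N" "v' = (1 / D') *\<^sub>R N'"
    unfolding v_def v'_def D_def D'_def N_def N'_def g_def g'_def by (simp_all add: vfield_eq)
  have N'eq: "N' = D' *\<^sub>R v'" using vN Dpos by simp
  have v'b: "norm v' \<le> diam" unfolding v'_def diam_def using part1[OF comp d0 d1] .
  define h where "h = (\<lambda>\<delta>. (g \<delta> - g' \<delta>) *\<^sub>R (\<delta> - v'))"
  have h_eq: "h = (\<lambda>\<delta>. (g \<delta> *\<^sub>R \<delta> - g' \<delta> *\<^sub>R \<delta>) - (g \<delta> - g' \<delta>) *\<^sub>R v')"
    unfolding h_def by (auto simp: algebra_simps)
  have ih: "integrable lborel h" unfolding h_eq using ig ign by auto
  have int_h: "integral\<^sup>L lborel h = N - N' - (D - D') *\<^sub>R v'"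
    unfolding h_eq N_def N'_def D_def D'_def using ig ign
    by (simp add: integral_diff integrable_diff)
  have vdiff: "v - v' = (1 / D) *\<^sub>R integral\<^sup>L lborel h"
    using Dpos unfolding int_h N'eq vN(1) by (simp add: algebra_simps)
  define F where "F = (\<lambda>\<delta>. (2 * w + w\<^sup>2) * g \<delta> + phi\<^sup>2 * (indicator A \<delta> + indicator B \<delta>))"
  have pw: "\<bar>g \<delta> - g' \<delta>\<bar> \<le> F \<delta>" for \<delta>
  proof (cases "\<delta> \<in> S"; cases "\<delta> \<in> S'")
    assume a: "\<delta> \<in> S" "\<delta> \<in> S'"
    have p: "z - t *\<^sub>R \<delta> \<in> \<Omega>" "z + (1 - t) *\<^sub>R \<delta> \<in> \<Omega>" "z' - t *\<^sub>R \<delta> \<in> \<Omega>" "z' + (1 - t) *\<^sub>R \<delta> \<in> \<Omega>"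
      using a unfolding S_def S'_def S_set_def by auto
    have pp: "0 < p0 (z - t *\<^sub>R \<delta>)" "0 < p1 (z + (1 - t) *\<^sub>R \<delta>)"
      using bnds p plo by force+
    have n1: "norm ((z' - t *\<^sub>R \<delta>) - (z - t *\<^sub>R \<delta>)) \<le> \<eta>" "norm ((z' + (1 - t) *\<^sub>R \<delta>) - (z + (1 - t) *\<^sub>R \<delta>)) \<le> \<eta>"
      using nz by (simp_all add: norm_minus_commute)
    have r: "\<bar>p0 (z' - t *\<^sub>R \<delta>) / p0 (z - t *\<^sub>R \<delta>) - 1\<bar> \<le> w"
         "\<bar>p1 (z' + (1 - t) *\<^sub>R \<delta>) / p1 (z + (1 - t) *\<^sub>R \<delta>) - 1\<bar> \<le> w"
      using rat p n1 by blast+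
    have "\<bar>g \<delta> - g' \<delta>\<bar> \<le> (2 * w + w\<^sup>2) * g \<delta>"
      using ratio_prod[OF pp r] a unfolding g_def g'_def wt_def S_def S'_def by simp
    moreover have "0 \<le> phi\<^sup>2 * (indicator A \<delta> + indicator B \<delta>)" by simp
    ultimately show ?thesis unfolding F_def by linarith
  next
    assume a: "\<delta> \<in> S" "\<delta> \<notin> S'"
    then have "\<bar>g \<delta> - g' \<delta>\<bar> \<le> phi\<^sup>2 * (indicator A \<delta> + indicator B \<delta>)"
      using gb gz g0 by (simp add: A_def B_def)
    moreover have "0 \<le> (2 * w + w\<^sup>2) * g \<delta>" using w g0 by simp
    ultimately show ?thesis unfolding F_def by linarith
  next
    assume a: "\<delta> \<notin> S" "\<delta> \<in> S'"
    then have "\<bar>g \<delta> - g' \<delta>\<bar> \<le> phi\<^sup>2 * (indicator A \<delta> + indicator B \<delta>)"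
      using gb gz g0 by (simp add: A_def B_def)
    moreover have "0 \<le> (2 * w + w\<^sup>2) * g \<delta>" using w g0 by simp
    ultimately show ?thesis unfolding F_def by linarith
  next
    assume a: "\<delta> \<notin> S" "\<delta> \<notin> S'"
    then show ?thesis using gz g0 w unfolding F_def by simp
  qed
  have nh: "norm (h \<delta>) \<le> 2 * diam * F \<delta>" for \<delta>
  proof (cases "g \<delta> - g' \<delta> = 0")
    case True then show ?thesis using pw[of \<delta>] diam0 by (simp add: h_def)
  next
    case False
    then have "\<delta> \<in> S \<or> \<delta> \<in> S'" using gz by (metis diff_self)
    then have "norm \<delta> \<le> diam" using S_norm_le[OF bd] unfolding S_def S'_def diam_def by blast
    then have "norm (\<delta> - v') \<le> 2 * diam" using v'b norm_triangle_ineq4[of \<delta> v'] by linarith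
    then have "norm (h \<delta>) \<le> \<bar>g \<delta> - g' \<delta>\<bar> * (2 * diam)"
      unfolding h_def by (simp add: mult_left_mono)
    also have "\<dots> \<le> F \<delta> * (2 * diam)" using pw[of \<delta>] diam0 by (simp add: mult_right_mono)
    finally show ?thesis by (simp add: mult.commute)
  qed
  have sAB: "A \<in> sets lborel" "B \<in> sets lborel" unfolding A_def B_def using sS by auto
  have finAB: "emeasure lborel A < \<infinity>" "emeasure lborel B < \<infinity>"
    unfolding A_def B_def using fin by (auto intro: le_less_trans[OF emeasure_mono] sS)
  have iF: "integrable lborel F" unfolding F_def using ig sAB finAB by auto
  have intF: "integral\<^sup>L lborel F = (2 * w + w\<^sup>2) * D + phi\<^sup>2 * (measure lborel A + measure lborel B)"
    unfolding F_def D_def using ig sAB finAB by simp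
  have "norm (integral\<^sup>L lborel h) \<le> integral\<^sup>L lborel (\<lambda>\<delta>. 2 * diam * F \<delta>)"
    by (rule Bochner_Integration.integral_norm_bound_integral) (use ih iF nh in auto)
  also have "\<dots> = 2 * diam * ((2 * w + w\<^sup>2) * D + phi\<^sup>2 * (measure lborel A + measure lborel B))"
    using intF by simp
  finally have nI: "norm (integral\<^sup>L lborel h) \<le> 2 * diam * ((2 * w + w\<^sup>2) * D + phi\<^sup>2 * (measure lborel A + measure lborel B))" .
  have msd: "measure lborel A + measure lborel B \<le> K * measure lborel S"
    unfolding A_def B_def S_def S'_def K_def using meas_sym_diff[OF comp cvx bz nz eta] .
  have "norm (v - v') \<le> (1 / D) * (2 * diam * ((2 * w + w\<^sup>2) * D + phi\<^sup>2 * (measure lborel A + measure lborel B)))"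
    unfolding vdiff using nI Dpos by (simp add: divide_right_mono)
  also have "\<dots> = 2 * diam * (2 * w + w\<^sup>2) + 2 * diam * phi\<^sup>2 * (measure lborel A + measure lborel B) / D"
    using Dpos by (simp add: field_simps)
  also have "\<dots> \<le> 2 * diam * (2 * w + w\<^sup>2) + 2 * diam * (phi\<^sup>2 / plo\<^sup>2) * K"
  proof -
    have K0: "0 \<le> K" unfolding K_def using eta by simp
    have "(measure lborel A + measure lborel B) / D \<le> K * measure lborel S / D"
      using msd Dpos by (simp add: divide_right_mono)
    also have "\<dots> \<le> K / plo\<^sup>2"
      using Dlow(1) Dpos plo K0 by (intro aux_div) auto
    finally have "(measure lborel A + measure lborel B) / D \<le> K / plo\<^sup>2" .
    then have "2 * diam * phi\<^sup>2 * ((measure lborel A + measure lborel B) / D) \<le> 2 * diam * phi\<^sup>2 * (K / plo\<^sup>2)"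
      using diam0 by (intro mult_left_mono) auto
    then show ?thesis by simp
  qed
  finally show ?thesis unfolding v_def v'_def diam_def K_def .
qed


lemma diam_ge_2eps:
  fixes \<Omega> :: "'a::euclidean_space set"
  assumes "bounded \<Omega>" "cball z \<epsilon> \<subseteq> \<Omega>" "0 \<le> \<epsilon>"
  shows "2 * \<epsilon> \<le> diameter \<Omega>"
proof -
  obtain e :: 'a where e: "e \<in> Basis" using nonempty_Basis by blast
  have n: "norm e = 1" using e by simp
  have "z + \<epsilon> *\<^sub>R e \<in> \<Omega>" "z - \<epsilon> *\<^sub>R e \<in> \<Omega>" using assms n by (auto simp: dist_norm subset_iff)
  then have "dist (z + \<epsilon> *\<^sub>R e) (z - \<epsilon> *\<^sub>R e) \<le> diameter \<Omega>"
    using assms(1) by (intro diameter_bounded_bound)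
  moreover have "dist (z + \<epsilon> *\<^sub>R e) (z - \<epsilon> *\<^sub>R e) = 2 * \<epsilon>"
  proof -
    have "(z + \<epsilon> *\<^sub>R e) - (z - \<epsilon> *\<^sub>R e) = \<epsilon> *\<^sub>R e + \<epsilon> *\<^sub>R e" by simp
    also have "\<dots> = (2 * \<epsilon>) *\<^sub>R e" by (metis scaleR_2 scaleR_scaleR)
    finally have eq: "(z + \<epsilon> *\<^sub>R e) - (z - \<epsilon> *\<^sub>R e) = (2 * \<epsilon>) *\<^sub>R e" .
    show ?thesis using n assms(3) by (simp add: dist_norm eq)
  qed
  ultimately show ?thesis by simp
qed

theorem lemma8:
  fixes \<Omega> :: "'a::euclidean_space set" and p0 p1 :: "'a \<Rightarrow> real"
  assumes "compact \<Omega>" and "convex \<Omega>" and "interior \<Omega> \<noteq> {}"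
    and "is_density_on \<Omega> p0" and "is_density_on \<Omega> p1"
  shows "(\<forall>z\<in>interior \<Omega>. \<forall>t\<in>{0..1}. norm (vfield \<Omega> p0 p1 t z) \<le> diameter \<Omega>)
   \<and> ((continuous_on \<Omega> p0 \<and> continuous_on \<Omega> p1
        \<and> bounded (p0 ` \<Omega>) \<and> bounded (p1 ` \<Omega>)
        \<and> (\<exists>c>0. \<forall>x\<in>\<Omega>. c \<le> p0 x \<and> c \<le> p1 x)) \<longrightarrow>
      (let plo = Inf ((\<lambda>x. min (p0 x) (p1 x)) ` \<Omega>);
           phi = Sup ((\<lambda>x. max (p0 x) (p1 x)) ` \<Omega>);
           L1 = 9 * diameter \<Omega>;
           L2 = (\<lambda>\<epsilon>::real. 3 * diameter \<Omega> / omega_inv1 \<Omega> p0 p1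
                 + (1 / \<epsilon>\<^sup>2) * (phi\<^sup>2 / plo\<^sup>2) * 3 * real DIM('a) * 5 ^ (DIM('a) + 1)
                   * (diameter \<Omega>)\<^sup>2)
       in \<forall>t\<in>{0..1}. \<forall>\<epsilon>>0. \<forall>\<eta>>0. \<forall>z\<in>inner_set \<Omega> \<epsilon>. \<forall>z'\<in>inner_set \<Omega> \<epsilon>.
            norm (z - z') \<le> \<eta> \<longrightarrow>
            norm (vfield \<Omega> p0 p1 t z - vfield \<Omega> p0 p1 t z') \<le> L1 * omega \<Omega> p0 p1 \<eta> + L2 \<epsilon> * \<eta>))"
proof (intro conjI impI)
  show "\<forall>z\<in>interior \<Omega>. \<forall>t\<in>{0..1}. norm (vfield \<Omega> p0 p1 t z) \<le> diameter \<Omega>"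
    using part1[OF assms(1,4,5)] by blast
next
  assume H: "continuous_on \<Omega> p0 \<and> continuous_on \<Omega> p1
        \<and> bounded (p0 ` \<Omega>) \<and> bounded (p1 ` \<Omega>)
        \<and> (\<exists>c>0. \<forall>x\<in>\<Omega>. c \<le> p0 x \<and> c \<le> p1 x)"
  then obtain c where c: "0 < c" "\<forall>x\<in>\<Omega>. c \<le> p0 x \<and> c \<le> p1 x" by blast
  from H obtain B0 where B0: "\<forall>x\<in>\<Omega>. norm (p0 x) \<le> B0" unfolding bounded_iff by blast
  from H obtain B1 where B1: "\<forall>x\<in>\<Omega>. norm (p1 x) \<le> B1" unfolding bounded_iff by blast
  have ne: "\<Omega> \<noteq> {}" using assms(3) interior_subset by blast
  have bd: "bounded \<Omega>" using assms(1) compact_imp_bounded by auto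
  define diam where "diam = diameter \<Omega>"
  have diam0: "0 \<le> diam" using diameter_ge_0[OF bd] by (simp add: diam_def)
  define plo where "plo = Inf ((\<lambda>x. min (p0 x) (p1 x)) ` \<Omega>)"
  define phi where "phi = Sup ((\<lambda>x. max (p0 x) (p1 x)) ` \<Omega>)"
  have bb: "bdd_below ((\<lambda>x. min (p0 x) (p1 x)) ` \<Omega>)" using c by (intro bdd_belowI[of _ c]) auto
  have ba: "bdd_above ((\<lambda>x. max (p0 x) (p1 x)) ` \<Omega>)"
    using B0 B1 by (intro bdd_aboveI[of _ "max B0 B1"]) (force simp: max_def)
  have plo_c: "c \<le> plo" unfolding plo_def using ne c by (intro cInf_greatest) auto
  have plo0: "0 < plo" using plo_c c by simp
  have bnds: "\<forall>x\<in>\<Omega>. plo \<le> p0 x \<and> p0 x \<le> phi \<and> plo \<le> p1 x \<and> p1 x \<le> phi"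
  proof
    fix x assume x: "x \<in> \<Omega>"
    have "plo \<le> min (p0 x) (p1 x)" unfolding plo_def using bb x by (intro cInf_lower) auto
    moreover have "max (p0 x) (p1 x) \<le> phi" unfolding phi_def using ba x by (intro cSup_upper) auto
    ultimately show "plo \<le> p0 x \<and> p0 x \<le> phi \<and> plo \<le> p1 x \<and> p1 x \<le> phi" by simp
  qed
  have plo_phi: "plo \<le> phi" using bnds ne by force
  define R where "R = phi\<^sup>2 / plo\<^sup>2"
  have R1: "1 \<le> R" unfolding R_def using plo0 plo_phi by (simp add: power_mono)
  define oi where "oi = omega_inv1 \<Omega> p0 p1"
  define V where "V = (\<lambda>\<eta>::real. (\<lambda>(z, z'). max \<bar>p0 z / p0 z' - 1\<bar> \<bar>p1 z / p1 z' - 1\<bar>) `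
          {(z, z'). z \<in> \<Omega> \<and> z' \<in> \<Omega> \<and> norm (z - z') \<le> \<eta>})"
  have omV: "omega \<Omega> p0 p1 \<eta> = Sup (V \<eta>)" for \<eta> unfolding omega_def V_def by simp
  have Vbdd: "bdd_above (V \<eta>)" for \<eta>
  proof (rule bdd_aboveI[of _ "phi / plo + 1"])
    fix r assume "r \<in> V \<eta>"
    then obtain x y where xy: "x \<in> \<Omega>" "y \<in> \<Omega>" "r = max \<bar>p0 x / p0 y - 1\<bar> \<bar>p1 x / p1 y - 1\<bar>"
      unfolding V_def by auto
    have q: "\<bar>p x / p y - 1\<bar> \<le> phi / plo + 1" if "plo \<le> p x" "p x \<le> phi" "plo \<le> p y" "p y \<le> phi" for p :: "'a \<Rightarrow> real"
    proof -
      have "0 \<le> p x / p y" using that plo0 by simp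
      moreover have "p x / p y \<le> phi / plo"
        using that plo0 by (intro frac_le) auto
      ultimately show ?thesis by linarith
    qed
    show "r \<le> phi / plo + 1" using xy bnds q[of p0] q[of p1] by auto
  qed
  have Vmem: "max \<bar>p0 x / p0 y - 1\<bar> \<bar>p1 x / p1 y - 1\<bar> \<in> V \<eta>"
    if "x \<in> \<Omega>" "y \<in> \<Omega>" "norm (x - y) \<le> \<eta>" for x y \<eta>
    unfolding V_def using that by force
  have rat: "\<forall>x\<in>\<Omega>. \<forall>y\<in>\<Omega>. norm (x - y) \<le> \<eta> \<longrightarrow>
      \<bar>p0 x / p0 y - 1\<bar> \<le> omega \<Omega> p0 p1 \<eta> \<and> \<bar>p1 x / p1 y - 1\<bar> \<le> omega \<Omega> p0 p1 \<eta>" for \<eta>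
  proof (intro ballI impI)
    fix x y assume xy: "x \<in> \<Omega>" "y \<in> \<Omega>" "norm (x - y) \<le> \<eta>"
    have "max \<bar>p0 x / p0 y - 1\<bar> \<bar>p1 x / p1 y - 1\<bar> \<le> omega \<Omega> p0 p1 \<eta>"
      unfolding omV using Vmem[OF xy] Vbdd by (intro cSup_upper)
    then show "\<bar>p0 x / p0 y - 1\<bar> \<le> omega \<Omega> p0 p1 \<eta> \<and> \<bar>p1 x / p1 y - 1\<bar> \<le> omega \<Omega> p0 p1 \<eta>" by simp
  qed
  have om0: "0 \<le> omega \<Omega> p0 p1 \<eta>" if "0 \<le> \<eta>" for \<eta>
  proof -
    obtain x where x: "x \<in> \<Omega>" using ne by blast
    have "\<bar>p0 x / p0 x - 1\<bar> \<le> omega \<Omega> p0 p1 \<eta>" using rat[of \<eta>] x that by (metis diff_self norm_zero)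
    then show ?thesis by (meson abs_ge_zero order_trans)
  qed
  have oi0: "0 \<le> oi"
  proof -
    have "omega \<Omega> p0 p1 0 \<le> 1" unfolding omV
    proof (rule cSup_least)
      obtain x where x: "x \<in> \<Omega>" using ne by blast
      show "V 0 \<noteq> {}" using Vmem[OF x x] by auto
      fix r assume "r \<in> V 0"
      then obtain x y where xy: "x \<in> \<Omega>" "y \<in> \<Omega>" "norm (x - y) \<le> 0" "r = max \<bar>p0 x / p0 y - 1\<bar> \<bar>p1 x / p1 y - 1\<bar>"
        unfolding V_def by auto
      then have "x = y" by simp
      then show "r \<le> 1" using xy bnds plo0 by force
    qed
    then have "0 \<in> {\<eta>. 0 \<le> \<eta> \<and> \<eta> \<le> diameter \<Omega> \<and> omega \<Omega> p0 p1 \<eta> \<le> 1}"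
      using diam0 by (simp add: diam_def)
    moreover have "bdd_above {\<eta>. 0 \<le> \<eta> \<and> \<eta> \<le> diameter \<Omega> \<and> omega \<Omega> p0 p1 \<eta> \<le> 1}"
      by (intro bdd_aboveI[of _ "diameter \<Omega>"]) auto
    ultimately show ?thesis unfolding oi_def omega_inv1_def by (intro cSup_upper2[of 0]) auto
  qed
  show "let plo = Inf ((\<lambda>x. min (p0 x) (p1 x)) ` \<Omega>);
           phi = Sup ((\<lambda>x. max (p0 x) (p1 x)) ` \<Omega>);
           L1 = 9 * diameter \<Omega>;
           L2 = (\<lambda>\<epsilon>::real. 3 * diameter \<Omega> / omega_inv1 \<Omega> p0 p1
                 + (1 / \<epsilon>\<^sup>2) * (phi\<^sup>2 / plo\<^sup>2) * 3 * real DIM('a) * 5 ^ (DIM('a) + 1)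
                   * (diameter \<Omega>)\<^sup>2)
       in \<forall>t\<in>{0..1}. \<forall>\<epsilon>>0. \<forall>\<eta>>0. \<forall>z\<in>inner_set \<Omega> \<epsilon>. \<forall>z'\<in>inner_set \<Omega> \<epsilon>.
            norm (z - z') \<le> \<eta> \<longrightarrow>
            norm (vfield \<Omega> p0 p1 t z - vfield \<Omega> p0 p1 t z') \<le> L1 * omega \<Omega> p0 p1 \<eta> + L2 \<epsilon> * \<eta>"
    unfolding Let_def plo_def[symmetric] phi_def[symmetric] oi_def[symmetric] diam_def[symmetric]
  proof (intro ballI allI impI)
    fix t \<epsilon> \<eta> :: real and z z' :: 'a
    assume t: "t \<in> {0..1}" and e: "0 < \<epsilon>" and eta: "0 < \<eta>"
      and z: "z \<in> inner_set \<Omega> \<epsilon>" and z': "z' \<in> inner_set \<Omega> \<epsilon>" and nz: "norm (z - z') \<le> \<eta>"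
    define w where "w = omega \<Omega> p0 p1 \<eta>"
    define G where "G = (1 / \<epsilon>\<^sup>2) * (phi\<^sup>2 / plo\<^sup>2) * 3 * real DIM('a) * 5 ^ (DIM('a) + 1) * diam\<^sup>2"
    have w0: "0 \<le> w" unfolding w_def using om0 eta by simp
    have cz: "cball z \<epsilon> \<subseteq> \<Omega>" "cball z' \<epsilon> \<subseteq> \<Omega>" using z z' by (auto simp: inner_set_def)
    have d2e: "2 * \<epsilon> \<le> diam" unfolding diam_def using diam_ge_2eps[OF bd cz(1)] e by simp
    have nv: "norm (vfield \<Omega> p0 p1 t z - vfield \<Omega> p0 p1 t z') \<le> 2 * diam"
    proof -
      have "norm (vfield \<Omega> p0 p1 t z) \<le> diam" "norm (vfield \<Omega> p0 p1 t z') \<le> diam"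
        using part1[OF assms(1,4,5)] by (auto simp: diam_def)
      then show ?thesis using norm_triangle_ineq4[of "vfield \<Omega> p0 p1 t z" "vfield \<Omega> p0 p1 t z'"] by linarith
    qed
    have T0: "0 \<le> 3 * diam / oi * \<eta>" using diam0 oi0 eta by simp
    have G0: "0 \<le> G * \<eta>" unfolding G_def using eta by simp
    have goal: "norm (vfield \<Omega> p0 p1 t z - vfield \<Omega> p0 p1 t z') \<le> 9 * diam * w + (3 * diam / oi + G) * \<eta>"
    proof (cases "1 < w")
      case True
      have "9 * diam * 1 \<le> 9 * diam * w" using True diam0 by (intro mult_left_mono) auto
      then have "2 * diam \<le> 9 * diam * w" using diam0 by linarith
      then show ?thesis using nv T0 G0 by (simp add: distrib_right)
    next
      case w1: False
      show ?thesis
      proof (cases "\<epsilon> / 2 < \<eta>")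
        case True
        define M where "M = R * 3 * real DIM('a) * 5 ^ (DIM('a) + 1)"
        have M2: "2 \<le> M"
        proof -
          have "(1::real) \<le> real DIM('a)" by simp
          moreover have "(1::real) \<le> 5 ^ (DIM('a) + 1)" by (rule one_le_power) simp
          ultimately have "1 \<le> real DIM('a) * 5 ^ (DIM('a) + 1)" using one_le_mult_iff by (metis mult_mono' zero_le_one mult_1)
          then have "1 \<le> R * real DIM('a) * 5 ^ (DIM('a) + 1)" using R1
            by (metis mult.assoc mult_mono' zero_le_one mult_1)
          then show ?thesis unfolding M_def by simp
        qed
        have GM: "G * \<eta> = M * (diam\<^sup>2 * \<eta> / \<epsilon>\<^sup>2)" unfolding G_def M_def R_def using e by (simp add: field_simps)
        have "\<epsilon>\<^sup>2 \<le> diam * \<eta>"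
        proof -
          have "(2 * \<epsilon>) * (\<epsilon> / 2) \<le> diam * \<eta>" using d2e True e by (intro mult_mono) auto
          then show ?thesis by (simp add: power2_eq_square)
        qed
        then have "diam * \<epsilon>\<^sup>2 \<le> diam\<^sup>2 * \<eta>" using diam0 by (simp add: power2_eq_square mult_left_mono mult.assoc)
        then have "diam \<le> diam\<^sup>2 * \<eta> / \<epsilon>\<^sup>2" using e by (simp add: le_divide_eq)
        then have "2 * diam \<le> M * (diam\<^sup>2 * \<eta> / \<epsilon>\<^sup>2)" using M2 diam0 by (intro mult_mono) auto
        then have "2 * diam \<le> G * \<eta>" using GM by simp
        moreover have "0 \<le> 9 * diam * w" using diam0 w0 by simp
        ultimately show ?thesis using nv T0 by (simp add: distrib_right)
      next
        case False
        then have eta2: "\<eta> \<le> \<epsilon> / 2" by simp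
        have main: "norm (vfield \<Omega> p0 p1 t z - vfield \<Omega> p0 p1 t z')
          \<le> 2 * diam * (2 * w + w\<^sup>2) + 2 * diam * R * ((real DIM('a) * \<eta> / \<epsilon>) * (1 + 2 ^ DIM('a)))"
          using part2_main[OF assms(1,2,4,5) plo0 bnds _ _ eta eta2 cz nz w0] t rat[of \<eta>]
          unfolding w_def diam_def R_def by auto
        have A1: "2 * diam * (2 * w + w\<^sup>2) \<le> 9 * diam * w"
        proof -
          have "w\<^sup>2 \<le> w" using w1 w0 by (simp add: power2_eq_square mult_left_le_one_le)
          then have "2 * w + w\<^sup>2 \<le> 9 / 2 * w" using w0 by simp
          then have "2 * diam * (2 * w + w\<^sup>2) \<le> 2 * diam * (9 / 2 * w)" using diam0 by (intro mult_left_mono) auto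
          then show ?thesis by simp
        qed
        have A2: "2 * diam * R * ((real DIM('a) * \<eta> / \<epsilon>) * (1 + 2 ^ DIM('a))) \<le> G * \<eta>"
        proof -
          define cc where "cc = diam * R * real DIM('a) * \<eta> / \<epsilon>\<^sup>2"
          have cc0: "0 \<le> cc" unfolding cc_def using diam0 R1 eta by simp
          have l: "2 * diam * R * ((real DIM('a) * \<eta> / \<epsilon>) * (1 + 2 ^ DIM('a))) = (2 * (1 + 2 ^ DIM('a)) * \<epsilon>) * cc"
            unfolding cc_def using e by (simp add: field_simps power2_eq_square)
          have r: "G * \<eta> = (3 * 5 ^ (DIM('a) + 1) * diam) * cc"
            unfolding cc_def G_def R_def using e by (simp add: field_simps power2_eq_square)
          have p: "(1::real) + 2 ^ DIM('a) \<le> 5 ^ (DIM('a) + 1)"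
          proof -
            have "(2::real) ^ DIM('a) \<le> 5 ^ DIM('a)" by (intro power_mono) auto
            moreover have "(1::real) \<le> 5 ^ DIM('a)" by (rule one_le_power) simp
            moreover have "(5::real) ^ (DIM('a) + 1) = 5 * 5 ^ DIM('a)" by simp
            ultimately show ?thesis by linarith
          qed
          have "2 * (1 + 2 ^ DIM('a)) * \<epsilon> \<le> 2 * 5 ^ (DIM('a) + 1) * \<epsilon>" using p e by simp
          also have "\<dots> \<le> 3 * 5 ^ (DIM('a) + 1) * diam" using d2e e by simp
          finally show ?thesis unfolding l r using cc0 by (intro mult_right_mono) auto
        qed
        show ?thesis using main A1 A2 T0 by (simp add: distrib_right)
      qed
    qed
    show "norm (vfield \<Omega> p0 p1 t z - vfield \<Omega> p0 p1 t z') \<le> 9 * diam * omega \<Omega> p0 p1 \<eta> + (3 * diam / oi + (1 / \<epsilon>\<^sup>2) * (phi\<^sup>2 / plo\<^sup>2) * 3 * real DIM('a) * 5 ^ (DIM('a) + 1) * diam\<^sup>2) * \<eta>"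
      using goal unfolding w_def G_def .
  qed
qed

end
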